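(* Let $\gamma>\frac d2$, $T>0$, $\tau>0$, $n\ge0$ with $t_n\le T$ where $t_n=n\tau$. Let $u$ solve $i\partial_tu+\Delta u+|u|^2u=0$ on $[0,T]\times\mathbb T^d$, let $v(t)=\mathrm e^{-it\Delta}u(t)$, and assume $v\in L^\infty((0,T);H^{\gamma+2}(\mathbb T^d))$. Define $\mathcal R_5^n(v)$ through its Fourier coefficients $$\widehat{\mathcal R_5^n(v)}(\boldsymbol\xi)=\sum_{\substack{\boldsymbol\xi_1,\boldsymbol\xi_2,\boldsymbol\xi_3\in\mathbb Z^d\\ \boldsymbol\xi_1+\boldsymbol\xi_2+\boldsymbol\xi_3=\boldsymbol\xi}}\mathcal R_2(\alpha,\beta,\tau)\,\mathrm e^{it_n\phi_3}\,\hat{\bar v}(t_n,\boldsymbol\xi_1)\hat v(t_n,\boldsymbol\xi_2)\hat v(t_n,\boldsymbol\xi_3),$$ where $\phi_3=|\boldsymbol\xi|^2+|\boldsymbol\xi_1|^2-|\boldsymbol\xi_2|^2-|\boldsymbol\xi_3|^2$, $\alpha=2|\boldsymbol\xi_1|^2$, $\beta=2\boldsymbol\xi_1\cdot\boldsymbol\xi_2+2\boldsymbol\xi_1\cdot\boldsymbol\xi_3+2\boldsymbol\xi_2\cdot\boldsymbol\xi_3$, and $$\mathcal R_2(\alpha,\beta,\tau)=\int_0^\tau\mathrm e^{is(\alpha+\beta)}ds-\tau\varphi(i\tau\alpha)+\tau\big(\mathrm e^{i\tau\beta}-1\big)\psi(i\tau\alpha).$$ Then $\|\mathcal R_5^n(v)\|_{H^\gamma}\le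 C\tau^3\|v\|^3_{L^\infty((0,T);H^{\gamma+2})}$ with $C$ independent of $\tau,n$.
   Context: $\mathbb T=(0,2\pi)$ periodic; $\hat f(\boldsymbol\xi)=(2\pi)^{-d}\int_{\mathbb T^d}\mathrm e^{-i\boldsymbol x\cdot\boldsymbol\xi}f(\boldsymbol x)d\boldsymbol x$, and $\hat{\bar v}$ denotes the Fourier coefficients of $\overline{v}$. $\mathrm e^{it\Delta}$ multiplies the $\boldsymbol\xi$-th Fourier coefficient by $\mathrm e^{-it|\boldsymbol\xi|^2}$. $\varphi(z)=\frac{e^z-1}{z}$ ($z\neq0$), $\varphi(0)=1$; $\psi(z)=\frac{e^z-1-ze^z}{z^2}$ ($z\neq0$), $\psi(0)=-\frac12$. $\|f\|_{H^s}=\|(1-\Delta)^{s/2}f\|_{L^2}$. *)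

theory Defs
  imports "HOL-Analysis.Analysis" "HOL-Probability.Essential_Supremum"
begin

text \<open>Functions on the torus T^d are represented by their Fourier coefficients
  c :: int^'d => complex, with hat f(xi) = (2 pi)^(-d) int e^(-i x.xi) f(x) dx.\<close>

definition idot :: "int^'d \<Rightarrow> int^'d \<Rightarrow> int" where
  "idot x y = (\<Sum>i\<in>UNIV. x$i * y$i)"

definition nsq :: "int^'d \<Rightarrow> int" where
  "nsq x = idot x x"

definition phi :: "complex \<Rightarrow> complex" where
  "phi z = (if z = 0 then 1 else (exp z - 1) / z)"

definition psi :: "complex \<Rightarrow> complex" where
  "psi z = (if z = 0 then - 1/2 else (exp z - 1 - z * exp z) / z^2)"

definition hs_weight :: "real \<Rightarrow> int^'d \<Rightarrow> real" where
  "hs_weight s \<xi> = (1 + real_of_int (nsq \<xi>)) powr s"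

definition in_Hs :: "real \<Rightarrow> (int^'d \<Rightarrow> complex) \<Rightarrow> bool" where
  "in_Hs s c \<longleftrightarrow> (\<lambda>\<xi>. hs_weight s \<xi> * (cmod (c \<xi>))^2) summable_on UNIV"

text \<open>||f||_{H^s} = ||(1-Delta)^{s/2} f||_{L^2(T^d)}, via Parseval:
  ||f||_{L^2}^2 = (2 pi)^d sum |hat f|^2.\<close>
definition hs_norm :: "real \<Rightarrow> (int^'d \<Rightarrow> complex) \<Rightarrow> real" where
  "hs_norm s c = sqrt ((2*pi)^CARD('d) * (\<Sum>\<^sub>\<infinity>\<xi>. hs_weight s \<xi> * (cmod (c \<xi>))^2))"

text \<open>Fourier coefficients of the complex conjugate: hat(bar f)(xi) = conj(hat f(-xi))\<close>
definition conj_coeff :: "(int^'d \<Rightarrow> complex) \<Rightarrow> int^'d \<Rightarrow> complex" where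
  "conj_coeff c \<xi> = cnj (c (- \<xi>))"

text \<open>Fourier coefficients of |f|^2 f = bar f * f * f\<close>
definition cubic_nl :: "(int^'d \<Rightarrow> complex) \<Rightarrow> int^'d \<Rightarrow> complex" where
  "cubic_nl c \<xi> = (\<Sum>\<^sub>\<infinity>(\<xi>1, \<xi>2) \<in> UNIV. conj_coeff c \<xi>1 * c \<xi>2 * c (\<xi> - \<xi>1 - \<xi>2))"

text \<open>u solves i u_t + Delta u + |u|^2 u = 0 on [0,T] x T^d (Fourier side,
  each coefficient differentiable in time)\<close>
definition nls_solution :: "real \<Rightarrow> (real \<Rightarrow> int^'d \<Rightarrow> complex) \<Rightarrow> bool" where
  "nls_solution T u \<longleftrightarrow> (\<forall>\<xi>. \<forall>t\<in>{0..T}. \<exists>D.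
      ((\<lambda>s. u s \<xi>) has_vector_derivative D) (at t within {0..T}) \<and>
      \<i> * D - of_int (nsq \<xi>) * u t \<xi> + cubic_nl (u t) \<xi> = 0)"

definition Linf_mem :: "real \<Rightarrow> real \<Rightarrow> (real \<Rightarrow> int^'d \<Rightarrow> complex) \<Rightarrow> bool" where
  "Linf_mem T s v \<longleftrightarrow>
     (AE t in restrict_space lborel {0<..<T}. in_Hs s (v t)) \<and>
     esssup (restrict_space lborel {0<..<T}) (\<lambda>t. ereal (hs_norm s (v t))) < \<infinity>"

definition Linf_norm :: "real \<Rightarrow> real \<Rightarrow> (real \<Rightarrow> int^'d \<Rightarrow> complex) \<Rightarrow> real" where
  "Linf_norm T s v =
     real_of_ereal (esssup (restrict_space lborel {0<..<T}) (\<lambda>t. ereal (hs_norm s (v t))))"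

definition R2 :: "real \<Rightarrow> real \<Rightarrow> real \<Rightarrow> complex" where
  "R2 \<alpha> \<beta> \<tau> =
     integral {0..\<tau>} (\<lambda>s. exp (\<i> * of_real (s * (\<alpha> + \<beta>))))
     - of_real \<tau> * phi (\<i> * of_real (\<tau> * \<alpha>))
     + of_real \<tau> * (exp (\<i> * of_real (\<tau> * \<beta>)) - 1) * psi (\<i> * of_real (\<tau> * \<alpha>))"

definition R5 :: "real \<Rightarrow> nat \<Rightarrow> (real \<Rightarrow> int^'d \<Rightarrow> complex) \<Rightarrow> int^'d \<Rightarrow> complex" where
  "R5 \<tau> n v \<xi> = (\<Sum>\<^sub>\<infinity>(\<xi>1, \<xi>2) \<in> UNIV.
     (let \<xi>3 = \<xi> - \<xi>1 - \<xi>2;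
          tn = real n * \<tau>;
          \<phi>3 = nsq \<xi> + nsq \<xi>1 - nsq \<xi>2 - nsq \<xi>3;
          \<alpha> = 2 * nsq \<xi>1;
          \<beta> = 2 * idot \<xi>1 \<xi>2 + 2 * idot \<xi>1 \<xi>3 + 2 * idot \<xi>2 \<xi>3
      in R2 (real_of_int \<alpha>) (real_of_int \<beta>) \<tau> * exp (\<i> * of_real (tn * real_of_int \<phi>3))
         * conj_coeff (v tn) \<xi>1 * v tn \<xi>2 * v tn \<xi>3))"

end

theory Submission
  imports Defs "HOL-Probability.Characteristic_Functions"
begin



lemma vd_iexp: "((\<lambda>s::real. exp (\<i> * of_real (s*a))) has_vector_derivative (\<i> * of_real a) * exp (\<i> * of_real (s*a))) (at s within S)"
proof -
  have "((\<lambda>z. exp (\<i> * (z * of_real a))) has_field_derivative (\<i> * of_real a) * exp (\<i> * (of_real s * of_real a))) (at (of_real s))"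
    by (auto intro!: derivative_eq_intros)
  from has_vector_derivative_real_field[OF this] show ?thesis by simp
qed

lemma I0_has_int:
  assumes "0 \<le> \<tau>"
  shows "((\<lambda>s. exp (\<i> * of_real (s*a))) has_integral of_real \<tau> * phi (\<i> * of_real (\<tau> * a))) {0..\<tau>}"
proof (cases "a = 0")
  case True
  have "((\<lambda>s::real. of_real s :: complex) has_vector_derivative 1) (at s within {0..\<tau>})" for s
    by (rule has_vector_derivative_eq_rhs, (rule derivative_eq_intros)+, auto)
  from fundamental_theorem_of_calculus[OF assms this]
  show ?thesis using True by (simp add: phi_def)
next
  case False
  define G where "G s = exp (\<i> * of_real (s*a)) / (\<i> * of_real a)" for s
  have "(G has_vector_derivative exp (\<i> * of_real (s*a))) (at s within {0..\<tau>})" for s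
    unfolding G_def
    by (rule has_vector_derivative_eq_rhs, rule has_vector_derivative_divide, rule vd_iexp) (use False in auto)
  from fundamental_theorem_of_calculus[OF assms this]
  have "((\<lambda>s. exp (\<i> * of_real (s*a))) has_integral G \<tau> - G 0) {0..\<tau>}" by simp
  moreover have "G \<tau> - G 0 = of_real \<tau> * phi (\<i> * of_real (\<tau> * a))"
    using False assms unfolding G_def phi_def
    by (cases "\<tau> = 0") (auto simp: field_simps)
  ultimately show ?thesis by simp
qed

lemma I1_has_int:
  assumes "0 \<le> \<tau>"
  shows "((\<lambda>s. of_real s * exp (\<i> * of_real (s*a))) has_integral (- ((of_real \<tau>)^2 * psi (\<i> * of_real (\<tau> * a))))) {0..\<tau>}"
proof (cases "a = 0")
  case True
  have "((\<lambda>s::real. of_real (s^2/2) :: complex) has_vector_derivative of_real s) (at s within {0..\<tau>})" for s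
  proof -
    have "((\<lambda>z::complex. z^2/2) has_field_derivative of_real s) (at (of_real s))"
      by (auto intro!: derivative_eq_intros)
    from has_vector_derivative_real_field[OF this] show ?thesis by simp
  qed
  from fundamental_theorem_of_calculus[OF assms this]
  show ?thesis using True by (simp add: psi_def power2_eq_square)
next
  case False
  define A where "A = (of_real a :: complex)"
  have A0: "A \<noteq> 0" using False by (simp add: A_def)
  define G where "G z = exp (\<i> * (z * A)) * (\<i> * z * A - 1) / (\<i> * A)^2" for z
  have "(G has_field_derivative (of_real s * exp (\<i> * (of_real s * A)))) (at (of_real s))" for s
    unfolding G_def
    apply (rule DERIV_cong)
     apply (rule derivative_eq_intros refl)+
    using A0 by (auto simp: field_simps power2_eq_square)
  from has_vector_derivative_real_field[OF this]
  have "((\<lambda>s. G (of_real s)) has_vector_derivative of_real s * exp (\<i> * of_real (s*a))) (at s within {0..\<tau>})" for s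
    by (simp add: A_def)
  from fundamental_theorem_of_calculus[OF assms this]
  have "((\<lambda>s. of_real s * exp (\<i> * of_real (s*a))) has_integral G (of_real \<tau>) - G (of_real 0)) {0..\<tau>}" by simp
  moreover have "G (of_real \<tau>) - G (of_real 0) = - ((of_real \<tau>)^2 * psi (\<i> * of_real (\<tau> * a)))"
    using A0 assms unfolding G_def psi_def A_def
    by (cases "\<tau> = 0") (auto simp: field_simps power2_eq_square)
  ultimately show ?thesis by simp
qed

lemma hib:
  fixes f :: "'n::euclidean_space \<Rightarrow> 'a::banach" and g :: "'n \<Rightarrow> real"
  assumes "(f has_integral i) S" "(g has_integral (j::real)) S" "\<And>x. x \<in> S \<Longrightarrow> norm (f x) \<le> g x"
  shows "norm i \<le> j"
  using has_integral_norm_bound_integral_component[OF assms(1,2), of 1] assms(3) by simp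

lemma iexp_rem: "cmod (exp (\<i> * of_real x) - 1 - \<i> * of_real x) \<le> x^2 / 2"
proof -
  have "cmod (exp (\<i> * of_real x) - (\<Sum>k\<le>1. (\<i> * of_real x)^k / fact k)) \<le> \<bar>x\<bar>^Suc 1 / fact (Suc 1)"
    by (rule iexp_approx1)
  then show ?thesis by (simp add: power2_eq_square diff_diff_eq)
qed

lemma psi_bound:
  assumes "0 < \<tau>"
  shows "cmod (psi (\<i> * of_real (\<tau> * a))) \<le> 1/2"
proof -
  have h: "((\<lambda>s. of_real s * exp (\<i> * of_real (s*a))) has_integral (- ((of_real \<tau>)^2 * psi (\<i> * of_real (\<tau> * a))))) {0..\<tau>}"
    using I1_has_int assms by simp
  have hs: "((\<lambda>s::real. s) has_integral \<tau>^2/2) {0..\<tau>}"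
  proof -
    have "((\<lambda>s::real. s^2/2) has_vector_derivative s) (at s within {0..\<tau>})" for s
      unfolding has_real_derivative_iff_has_vector_derivative[symmetric]
      by (auto intro!: derivative_eq_intros)
    from fundamental_theorem_of_calculus[OF _ this] assms show ?thesis by simp
  qed
  have "norm (- ((of_real \<tau>)^2 * psi (\<i> * of_real (\<tau> * a)))) \<le> \<tau>^2/2"
    by (rule hib[OF h hs]) (auto simp: norm_mult)
  then have "\<tau>^2 * cmod (psi (\<i> * of_real (\<tau> * a))) \<le> \<tau>^2 * (1/2)"
    by (simp add: norm_mult norm_power)
  then show ?thesis using assms by (simp add: mult_le_cancel_left)
qed

lemma R2_bound:
  assumes "0 < \<tau>"
  shows "cmod (R2 a b \<tau>) \<le> \<tau>^3 * b^2 / 2"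
proof -
  define E where "E s = exp (\<i> * of_real (s*a))" for s
  define B where "B s = exp (\<i> * of_real (s*b))" for s
  define g where "g s = E s * (B s - 1 - \<i> * of_real (s*b))" for s
  have cg: "continuous_on {0..\<tau>} g" unfolding g_def E_def B_def
    by (intro continuous_intros)
  have ig: "g integrable_on {0..\<tau>}" by (rule integrable_continuous_real[OF cg])
  have h0: "(E has_integral of_real \<tau> * phi (\<i> * of_real (\<tau> * a))) {0..\<tau>}"
    unfolding E_def using I0_has_int assms by simp
  have h1: "((\<lambda>s. of_real s * E s) has_integral (- ((of_real \<tau>)^2 * psi (\<i> * of_real (\<tau> * a))))) {0..\<tau>}"
    unfolding E_def using I1_has_int assms by simp
  have eq: "exp (\<i> * of_real (s * (a + b))) = g s + E s + (\<i> * of_real b) * (of_real s * E s)" for s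
    unfolding g_def E_def B_def by (simp add: algebra_simps exp_add[symmetric])
  have "((\<lambda>s. g s + E s + (\<i> * of_real b) * (of_real s * E s)) has_integral
      integral {0..\<tau>} g + of_real \<tau> * phi (\<i> * of_real (\<tau> * a)) + (\<i> * of_real b) * (- ((of_real \<tau>)^2 * psi (\<i> * of_real (\<tau> * a))))) {0..\<tau>}"
    by (intro has_integral_add has_integral_mult_right h0 h1 integrable_integral ig)
  then have int_eq: "integral {0..\<tau>} (\<lambda>s. exp (\<i> * of_real (s * (a + b)))) =
      integral {0..\<tau>} g + of_real \<tau> * phi (\<i> * of_real (\<tau> * a)) + (\<i> * of_real b) * (- ((of_real \<tau>)^2 * psi (\<i> * of_real (\<tau> * a))))"
    unfolding eq by (rule integral_unique)
  define P where "P = psi (\<i> * of_real (\<tau> * a))"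
  have R2eq: "R2 a b \<tau> = integral {0..\<tau>} g + of_real \<tau> * P * (B \<tau> - 1 - \<i> * of_real (\<tau> * b))"
    unfolding R2_def int_eq P_def B_def by (simp add: algebra_simps power2_eq_square)
  have hq: "((\<lambda>s::real. s^2 * b^2 / 2) has_integral \<tau>^3 * b^2 / 6) {0..\<tau>}"
  proof -
    have "((\<lambda>s::real. s^3 * b^2 / 6) has_vector_derivative s^2 * b^2/2) (at s within {0..\<tau>})" for s
      unfolding has_real_derivative_iff_has_vector_derivative[symmetric]
      by (auto intro!: derivative_eq_intros simp: power2_eq_square power3_eq_cube)
    from fundamental_theorem_of_calculus[OF _ this] assms show ?thesis by simp
  qed
  have "norm (integral {0..\<tau>} g) \<le> \<tau>^3 * b^2 / 6"
  proof (rule hib[OF integrable_integral[OF ig] hq])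
    fix s assume "s \<in> {0..\<tau>}"
    have "cmod (g s) = cmod (B s - 1 - \<i> * of_real (s*b))"
      unfolding g_def E_def by (simp add: norm_mult)
    also have "\<dots> \<le> (s*b)^2/2" unfolding B_def by (rule iexp_rem)
    finally show "norm (g s) \<le> s^2 * b^2 / 2" by (simp add: power_mult_distrib)
  qed
  moreover have "cmod (of_real \<tau> * P * (B \<tau> - 1 - \<i> * of_real (\<tau> * b))) \<le> \<tau> * (1/2) * ((\<tau>*b)^2/2)"
  proof -
    have "cmod (of_real \<tau> * P * (B \<tau> - 1 - \<i> * of_real (\<tau> * b))) = \<tau> * cmod P * cmod (B \<tau> - 1 - \<i> * of_real (\<tau> * b))"
      using assms by (simp add: norm_mult)
    also have "\<dots> \<le> \<tau> * (1/2) * ((\<tau>*b)^2/2)"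
      using psi_bound[OF assms, of a] iexp_rem[of "\<tau>*b"] assms unfolding P_def B_def
      by (intro mult_mono) auto
    finally show ?thesis .
  qed
  ultimately have "cmod (R2 a b \<tau>) \<le> \<tau>^3 * b^2 / 6 + \<tau> * (1/2) * ((\<tau>*b)^2/2)"
    unfolding R2eq by (meson add_mono norm_triangle_ineq order_trans)
  also have "\<dots> \<le> \<tau>^3 * b^2 / 2"
    using assms by (simp add: power_mult_distrib power2_eq_square power3_eq_cube field_simps)
  finally show ?thesis .
qed




lemma dense_AE:
  fixes g :: "real \<Rightarrow> real"
  assumes T: "T > 0" and cg: "continuous_on {0..T} g"
    and ae: "AE t in restrict_space lborel {0<..<T}. g t \<le> B" and t0: "t0 \<in> {0..T}"
  shows "g t0 \<le> B"
proof (rule ccontr)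
  assume "\<not> g t0 \<le> B"
  then have gt: "g t0 - B > 0" by simp
  from cg t0 gt obtain \<delta> where d: "\<delta> > 0" and dd: "\<And>t. t \<in> {0..T} \<Longrightarrow> dist t t0 < \<delta> \<Longrightarrow> dist (g t) (g t0) < g t0 - B"
    unfolding continuous_on_iff by metis
  define a where "a = max 0 (t0 - \<delta>)"
  define b where "b = min T (t0 + \<delta>)"
  have ab: "a < b" using t0 d T unfolding a_def b_def by auto
  have sub: "{a<..<b} \<subseteq> {0<..<T}" unfolding a_def b_def by auto
  have gtB: "g t > B" if "t \<in> {a<..<b}" for t
  proof -
    have "t \<in> {0..T}" "dist t t0 < \<delta>" using that unfolding a_def b_def dist_real_def by auto
    from dd[OF this] show ?thesis unfolding dist_real_def by auto
  qed
  have "AE t in lborel. t \<in> {0<..<T} \<longrightarrow> g t \<le> B"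
    using ae by (subst (asm) AE_restrict_space_iff) auto
  then have "AE t in lborel. t \<notin> {a<..<b}"
    by eventually_elim (use sub gtB in force)
  then have "{a<..<b} \<in> null_sets lborel"
    by (subst AE_iff_null_sets) auto
  then have "emeasure lborel {a<..<b} = 0" by auto
  with ab show False by simp
qed

lemma reg:
  fixes v :: "real \<Rightarrow> int^'d \<Rightarrow> complex"
  assumes T: "T > 0" and cont: "\<And>\<xi>. continuous_on {0..T} (\<lambda>t. v t \<xi>)"
    and mem: "Linf_mem T s v" and t0: "t0 \<in> {0..T}"
  shows "(\<lambda>\<xi>. hs_weight s \<xi> * (cmod (v t0 \<xi>))^2) summable_on UNIV \<and>
         (2*pi)^CARD('d) * (\<Sum>\<^sub>\<infinity>\<xi>. hs_weight s \<xi> * (cmod (v t0 \<xi>))^2) \<le> (Linf_norm T s v)^2"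
proof -
  define M where "M = restrict_space lborel {0<..<T}"
  define E where "E = esssup M (\<lambda>t. ereal (hs_norm s (v t)))"
  define L where "L = Linf_norm T s v"
  have LE: "L = real_of_ereal E" unfolding L_def E_def M_def Linf_norm_def ..
  define B where "B = L^2 / (2*pi)^CARD('d)"
  define f where "f t \<xi> = hs_weight s \<xi> * (cmod (v t \<xi>))^2" for t \<xi>
  have fnn: "f t \<xi> \<ge> 0" for t \<xi> unfolding f_def hs_weight_def by simp
  have Einf: "E < \<infinity>" using mem unfolding Linf_mem_def E_def M_def by simp
  have ae1: "AE t in M. in_Hs s (v t)" using mem unfolding Linf_mem_def M_def by simp
  have ae2: "AE t in M. ereal (hs_norm s (v t)) \<le> E" unfolding E_def by (rule esssup_AE)
  have pi_pos: "(2*pi)^CARD('d) > 0" by simp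
  have ae3: "AE t in M. f t summable_on UNIV \<and> infsum (f t) UNIV \<le> B"
    using ae1 ae2
  proof eventually_elim
    case (elim t)
    have sm: "f t summable_on UNIV" using elim(1) unfolding in_Hs_def f_def by simp
    have hn: "hs_norm s (v t) \<le> L"
      using elim(2) Einf unfolding LE by (cases E) auto
    have X0: "infsum (f t) UNIV \<ge> 0" by (rule infsum_nonneg) (simp add: fnn)
    have "hs_norm s (v t) = sqrt ((2*pi)^CARD('d) * infsum (f t) UNIV)"
      unfolding hs_norm_def f_def ..
    then have "(hs_norm s (v t))^2 = (2*pi)^CARD('d) * infsum (f t) UNIV"
      using X0 by simp
    moreover have "(hs_norm s (v t))^2 \<le> L^2"
    proof (rule power_mono[OF hn])
      show "0 \<le> hs_norm s (v t)" using X0 unfolding hs_norm_def f_def by simp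
    qed
    ultimately have "(2*pi)^CARD('d) * infsum (f t) UNIV \<le> L^2" by simp
    then have "infsum (f t) UNIV \<le> B" unfolding B_def using pi_pos
      by (simp add: field_simps)
    with sm show ?case by simp
  qed
  have fin: "sum (f t0) F \<le> B" if "finite F" for F
  proof -
    have "AE t in M. sum (f t) F \<le> B"
      using ae3 by eventually_elim (metis finite_sum_le_infsum fnn order_trans subset_UNIV \<open>finite F\<close>)
    moreover have "continuous_on {0..T} (\<lambda>t. sum (f t) F)"
      unfolding f_def by (intro continuous_intros cont)
    ultimately show ?thesis using dense_AE[OF T _ _ t0] unfolding M_def by blast
  qed
  have sm: "f t0 summable_on UNIV"
    by (rule nonneg_bdd_above_summable_on) (use fnn fin in \<open>auto intro!: bdd_aboveI\<close>)
  have "infsum (f t0) UNIV \<le> B" by (rule infsum_le_finite_sums[OF sm]) (use fin in auto)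
  then have "(2*pi)^CARD('d) * infsum (f t0) UNIV \<le> L^2"
    unfolding B_def using pi_pos by (simp add: field_simps)
  with sm show ?thesis unfolding f_def L_def by simp
qed




abbreviation CS where "CS \<equiv> count_space UNIV"

lemma pair_split:
  fixes f :: "('a::countable \<times> 'b::countable) \<Rightarrow> ennreal"
  shows "(\<integral>\<^sup>+z. f z \<partial>CS) = (\<integral>\<^sup>+p. \<integral>\<^sup>+q. f (p,q) \<partial>CS \<partial>CS)"
proof -
  have e: "(CS :: ('a \<times> 'b) measure) = (CS :: 'a measure) \<Otimes>\<^sub>M (CS :: 'b measure)"
    using pair_measure_countable[of "UNIV::'a set" "UNIV::'b set"] by simp
  interpret sigma_finite_measure "CS :: 'b measure"
    by (rule sigma_finite_measure_count_space_countable) simp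
  have "(\<integral>\<^sup>+p. \<integral>\<^sup>+q. f (p,q) \<partial>CS \<partial>CS) = integral\<^sup>N ((CS :: 'a measure) \<Otimes>\<^sub>M (CS :: 'b measure)) f"
    by (rule nn_integral_fst) (simp add: e[symmetric])
  then show ?thesis by (simp add: e[symmetric])
qed

lemma pair_prod:
  fixes b :: "'a::countable \<Rightarrow> ennreal" and c :: "'b::countable \<Rightarrow> ennreal"
  shows "(\<integral>\<^sup>+z. b (fst z) * c (snd z) \<partial>CS) = (\<integral>\<^sup>+p. b p \<partial>CS) * (\<integral>\<^sup>+q. c q \<partial>CS)"
  by (simp add: pair_split nn_integral_cmult nn_integral_multc)

lemma swap_int:
  fixes F :: "'a::countable \<Rightarrow> 'b::countable \<Rightarrow> ennreal"
  shows "(\<integral>\<^sup>+x. \<integral>\<^sup>+y. F x y \<partial>CS \<partial>CS) = (\<integral>\<^sup>+y. \<integral>\<^sup>+x. F x y \<partial>CS \<partial>CS)"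
  by (rule nn_integral_count_space_nn_integral) auto

lemma shift_int:
  fixes f :: "int^'d \<Rightarrow> ennreal"
  shows "(\<integral>\<^sup>+x. f (x - c) \<partial>CS) = (\<integral>\<^sup>+x. f x \<partial>CS)"
proof -
  have "bij_betw (\<lambda>x. x - c) UNIV UNIV"
    by (rule bij_betwI[where g="\<lambda>x. x + c"]) auto
  from nn_integral_bij_count_space[OF this] show ?thesis .
qed

lemma CS_ineq:
  fixes f g :: "'a \<Rightarrow> ennreal"
  shows "(\<integral>\<^sup>+x. f x * g x \<partial>CS)^2 \<le> (\<integral>\<^sup>+x. f x ^ 2 \<partial>CS) * (\<integral>\<^sup>+x. g x ^ 2 \<partial>CS)"
  by (rule Cauchy_Schwarz_nn_integral) auto

lemma young:
  fixes A b c :: "int^'d \<Rightarrow> real"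
  assumes A: "\<And>x. A x \<ge> 0" and b: "\<And>x. b x \<ge> 0" and c: "\<And>x. c x \<ge> 0"
  shows "(\<integral>\<^sup>+\<xi>. (\<integral>\<^sup>+z. ennreal (A (\<xi> - fst z - snd z) * b (fst z) * c (snd z)) \<partial>CS)^2 \<partial>CS)
     \<le> (\<integral>\<^sup>+x. ennreal ((A x)^2) \<partial>CS) * ((\<integral>\<^sup>+x. ennreal (b x) \<partial>CS)^2 * (\<integral>\<^sup>+x. ennreal (c x) \<partial>CS)^2)"
proof -
  define K where "K = (\<integral>\<^sup>+z. ennreal (b (fst z) * c (snd z)) \<partial>CS)"
  define NA where "NA = (\<integral>\<^sup>+x. ennreal ((A x)^2) \<partial>CS)"
  have K: "K = (\<integral>\<^sup>+x. ennreal (b x) \<partial>CS) * (\<integral>\<^sup>+x. ennreal (c x) \<partial>CS)"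
    unfolding K_def using b c pair_prod[of "\<lambda>x. ennreal (b x)" "\<lambda>x. ennreal (c x)"] by (simp add: ennreal_mult)
  have pw: "(\<integral>\<^sup>+z. ennreal (A (\<xi> - fst z - snd z) * b (fst z) * c (snd z)) \<partial>CS)^2
      \<le> K * (\<integral>\<^sup>+z. ennreal (b (fst z) * c (snd z)) * ennreal ((A (\<xi> - fst z - snd z))^2) \<partial>CS)" for \<xi>
  proof -
    define u where "u z = ennreal (sqrt (b (fst z) * c (snd z)))" for z :: "(int^'d) \<times> (int^'d)"
    define v where "v z = ennreal (sqrt (b (fst z) * c (snd z)) * A (\<xi> - fst z - snd z))" for z :: "(int^'d) \<times> (int^'d)"
    have "(\<integral>\<^sup>+z. ennreal (A (\<xi> - fst z - snd z) * b (fst z) * c (snd z)) \<partial>CS) = (\<integral>\<^sup>+z. u z * v z \<partial>CS)"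
    proof (rule nn_integral_cong)
      fix z :: "(int^'d) \<times> (int^'d)"
      have "sqrt (b (fst z) * c (snd z)) * (sqrt (b (fst z) * c (snd z)) * A (\<xi> - fst z - snd z))
          = A (\<xi> - fst z - snd z) * b (fst z) * c (snd z)"
        using b c by (simp add: mult_nonneg_nonneg flip: mult.assoc)
      then show "ennreal (A (\<xi> - fst z - snd z) * b (fst z) * c (snd z)) = u z * v z"
        unfolding u_def v_def using A b c by (simp add: ennreal_mult[symmetric])
    qed
    also have "(\<dots>)^2 \<le> (\<integral>\<^sup>+z. u z ^ 2 \<partial>CS) * (\<integral>\<^sup>+z. v z ^ 2 \<partial>CS)" by (rule CS_ineq)
    also have "(\<integral>\<^sup>+z. u z ^ 2 \<partial>CS) = K"
      unfolding K_def u_def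
    proof (intro nn_integral_cong)
      fix z :: "(int^'d) \<times> (int^'d)"
      have "0 \<le> b (fst z) * c (snd z)" using b c by simp
      then show "(ennreal (sqrt (b (fst z) * c (snd z))))^2 = ennreal (b (fst z) * c (snd z))"
        by (simp add: ennreal_power)
    qed
    also have "(\<integral>\<^sup>+z. v z ^ 2 \<partial>CS) = (\<integral>\<^sup>+z. ennreal (b (fst z) * c (snd z)) * ennreal ((A (\<xi> - fst z - snd z))^2) \<partial>CS)"
      unfolding v_def
    proof (intro nn_integral_cong)
      fix z :: "(int^'d) \<times> (int^'d)"
      have h: "0 \<le> b (fst z) * c (snd z)" "0 \<le> A (\<xi> - fst z - snd z)" using A b c by simp_all
      then have "(ennreal (sqrt (b (fst z) * c (snd z)) * A (\<xi> - fst z - snd z)))^2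
          = ennreal ((sqrt (b (fst z) * c (snd z)) * A (\<xi> - fst z - snd z))^2)"
        by (simp add: ennreal_power)
      also have "\<dots> = ennreal (b (fst z) * c (snd z) * (A (\<xi> - fst z - snd z))^2)"
        using h by (simp add: power_mult_distrib)
      also have "\<dots> = ennreal (b (fst z) * c (snd z)) * ennreal ((A (\<xi> - fst z - snd z))^2)"
        using h by (simp add: ennreal_mult)
      finally show "(ennreal (sqrt (b (fst z) * c (snd z)) * A (\<xi> - fst z - snd z)))^2
          = ennreal (b (fst z) * c (snd z)) * ennreal ((A (\<xi> - fst z - snd z))^2)" .
    qed
    finally show ?thesis .
  qed
  have "(\<integral>\<^sup>+\<xi>. (\<integral>\<^sup>+z. ennreal (A (\<xi> - fst z - snd z) * b (fst z) * c (snd z)) \<partial>CS)^2 \<partial>CS)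
      \<le> (\<integral>\<^sup>+\<xi>. K * (\<integral>\<^sup>+z. ennreal (b (fst z) * c (snd z)) * ennreal ((A (\<xi> - fst z - snd z))^2) \<partial>CS) \<partial>CS)"
    by (intro nn_integral_mono pw)
  also have "\<dots> = K * (\<integral>\<^sup>+\<xi>. \<integral>\<^sup>+z. ennreal (b (fst z) * c (snd z)) * ennreal ((A (\<xi> - fst z - snd z))^2) \<partial>CS \<partial>CS)"
    by (simp add: nn_integral_cmult)
  also have "(\<integral>\<^sup>+\<xi>. \<integral>\<^sup>+z. ennreal (b (fst z) * c (snd z)) * ennreal ((A (\<xi> - fst z - snd z))^2) \<partial>CS \<partial>CS)
      = (\<integral>\<^sup>+z. \<integral>\<^sup>+\<xi>. ennreal (b (fst z) * c (snd z)) * ennreal ((A (\<xi> - fst z - snd z))^2) \<partial>CS \<partial>CS)"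
    by (rule swap_int)
  also have "\<dots> = (\<integral>\<^sup>+z. ennreal (b (fst z) * c (snd z)) * NA \<partial>CS)"
  proof (rule nn_integral_cong)
    fix z :: "(int^'d) \<times> (int^'d)"
    have "(\<integral>\<^sup>+\<xi>. ennreal ((A (\<xi> - fst z - snd z))^2) \<partial>CS) = (\<integral>\<^sup>+\<xi>. ennreal ((A (\<xi> - (fst z + snd z)))^2) \<partial>CS)"
      by (simp add: diff_diff_eq)
    also have "\<dots> = NA" unfolding NA_def by (rule shift_int[where f="\<lambda>x. ennreal ((A x)^2)"])
    finally show "(\<integral>\<^sup>+\<xi>. ennreal (b (fst z) * c (snd z)) * ennreal ((A (\<xi> - fst z - snd z))^2) \<partial>CS)
        = ennreal (b (fst z) * c (snd z)) * NA"
      by (simp add: nn_integral_cmult)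
  qed
  also have "\<dots> = K * NA" unfolding K_def by (simp add: nn_integral_multc)
  finally show ?thesis unfolding K NA_def by (simp add: power2_eq_square mult_ac)
qed

lemma sq3_ennreal:
  fixes x y z :: ennreal
  shows "(x + y + z)^2 \<le> 3 * (x^2 + y^2 + z^2)"
proof -
  have e1: "(x + y + z)^2 = x^2 + y^2 + z^2 + (2*x*y + 2*y*z + 2*x*z)"
    unfolding power2_eq_square mult_2 distrib_left distrib_right by (simp only: ac_simps)
  have "2*x*y + 2*y*z + 2*x*z \<le> (x^2 + y^2) + (y^2 + z^2) + (x^2 + z^2)"
    by (intro add_mono sum_of_squares_ge_ennreal)
  then have "(x + y + z)^2 \<le> x^2 + y^2 + z^2 + ((x^2 + y^2) + (y^2 + z^2) + (x^2 + z^2))"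
    unfolding e1 by (rule add_left_mono)
  also have "\<dots> = 3 * (x^2 + y^2 + z^2)"
  proof -
    have t: "(3::ennreal) = 1 + 1 + 1" by simp
    show ?thesis unfolding t distrib_left distrib_right mult_1 by (simp only: ac_simps)
  qed
  finally show ?thesis .
qed

lemma L1_bound:
  fixes a W :: "int^'d \<Rightarrow> real"
  assumes a: "\<And>x. a x \<ge> 0" and W: "\<And>x. W x > 0"
  shows "(\<integral>\<^sup>+x. ennreal (a x) \<partial>CS)^2 \<le> (\<integral>\<^sup>+x. ennreal (1 / (W x)^2) \<partial>CS) * (\<integral>\<^sup>+x. ennreal ((W x)^2 * (a x)^2) \<partial>CS)"
proof -
  have "(\<integral>\<^sup>+x. ennreal (a x) \<partial>CS) = (\<integral>\<^sup>+x. ennreal (1 / W x) * ennreal (W x * a x) \<partial>CS)"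
  proof (rule nn_integral_cong)
    fix x
    have "W x > 0" "a x \<ge> 0" using a W by auto
    then show "ennreal (a x) = ennreal (1 / W x) * ennreal (W x * a x)"
      by (simp add: ennreal_mult[symmetric])
  qed
  also have "(\<dots>)^2 \<le> (\<integral>\<^sup>+x. (ennreal (1 / W x))^2 \<partial>CS) * (\<integral>\<^sup>+x. (ennreal (W x * a x))^2 \<partial>CS)"
    by (rule CS_ineq)
  also have "\<dots> = (\<integral>\<^sup>+x. ennreal (1 / (W x)^2) \<partial>CS) * (\<integral>\<^sup>+x. ennreal ((W x)^2 * (a x)^2) \<partial>CS)"
  proof -
    have "(ennreal (1 / W x))^2 = ennreal (1 / (W x)^2)" for x
      using W[of x] by (simp add: ennreal_power power_one_over)
    moreover have "(ennreal (W x * a x))^2 = ennreal ((W x)^2 * (a x)^2)" for x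
      using W[of x] a[of x] by (simp add: ennreal_power power_mult_distrib)
    ultimately show ?thesis by simp
  qed
  finally show ?thesis .
qed

lemma pair_reindex:
  fixes f :: "(int^'d) \<times> (int^'d) \<Rightarrow> ennreal" and g :: "(int^'d) \<times> (int^'d) \<Rightarrow> (int^'d) \<times> (int^'d)"
  assumes "bij g"
  shows "(\<integral>\<^sup>+z. f (g z) \<partial>CS) = (\<integral>\<^sup>+z. f z \<partial>CS)"
  using nn_integral_bij_count_space[OF assms] .

lemma tri_generic:
  fixes W a1 a2 a3 :: "int^'d \<Rightarrow> real" and \<kappa> :: real
  assumes W: "\<And>x. W x > 0" and \<kappa>: "\<kappa> \<ge> 0"
    and Wtri: "\<And>p q r. W (p + q + r) \<le> \<kappa> * (W p + W q + W r)"
    and a1: "\<And>x. a1 x \<ge> 0" and a2: "\<And>x. a2 x \<ge> 0" and a3: "\<And>x. a3 x \<ge> 0"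
  shows "(\<integral>\<^sup>+\<xi>. ennreal ((W \<xi>)^2) * (\<integral>\<^sup>+z. ennreal (a1 (fst z) * a2 (snd z) * a3 (\<xi> - fst z - snd z)) \<partial>CS)^2 \<partial>CS)
    \<le> ennreal (9 * \<kappa>^2) * ((\<integral>\<^sup>+x. ennreal (1 / (W x)^2) \<partial>CS)^2 *
        ((\<integral>\<^sup>+x. ennreal ((W x)^2 * (a1 x)^2) \<partial>CS) * (\<integral>\<^sup>+x. ennreal ((W x)^2 * (a2 x)^2) \<partial>CS) * (\<integral>\<^sup>+x. ennreal ((W x)^2 * (a3 x)^2) \<partial>CS)))"
proof -
  define S where "S = (\<integral>\<^sup>+x. ennreal (1 / (W x)^2) \<partial>CS)"
  define N1 where "N1 = (\<integral>\<^sup>+x. ennreal ((W x)^2 * (a1 x)^2) \<partial>CS)"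
  define N2 where "N2 = (\<integral>\<^sup>+x. ennreal ((W x)^2 * (a2 x)^2) \<partial>CS)"
  define N3 where "N3 = (\<integral>\<^sup>+x. ennreal ((W x)^2 * (a3 x)^2) \<partial>CS)"
  define conv where "conv \<xi> = (\<integral>\<^sup>+z. ennreal (a1 (fst z) * a2 (snd z) * a3 (\<xi> - fst z - snd z)) \<partial>CS)" for \<xi>
  define h1 where "h1 \<xi> = (\<integral>\<^sup>+z. ennreal (W (fst z) * a1 (fst z) * a2 (snd z) * a3 (\<xi> - fst z - snd z)) \<partial>CS)" for \<xi>
  define h2 where "h2 \<xi> = (\<integral>\<^sup>+z. ennreal (a1 (fst z) * W (snd z) * a2 (snd z) * a3 (\<xi> - fst z - snd z)) \<partial>CS)" for \<xi>
  define h3 where "h3 \<xi> = (\<integral>\<^sup>+z. ennreal (a1 (fst z) * a2 (snd z) * (W (\<xi> - fst z - snd z) * a3 (\<xi> - fst z - snd z))) \<partial>CS)" for \<xi>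
  have Wnn: "W x \<ge> 0" for x using W[of x] by simp
  have step1: "ennreal (W \<xi>) * conv \<xi> \<le> ennreal \<kappa> * (h1 \<xi> + h2 \<xi> + h3 \<xi>)" for \<xi>
  proof -
    have "ennreal (W \<xi>) * conv \<xi> = (\<integral>\<^sup>+z. ennreal (W \<xi> * (a1 (fst z) * a2 (snd z) * a3 (\<xi> - fst z - snd z))) \<partial>CS)"
      unfolding conv_def using Wnn a1 a2 a3
      by (simp add: nn_integral_cmult[symmetric] ennreal_mult[symmetric] mult_nonneg_nonneg)
    also have "\<dots> \<le> (\<integral>\<^sup>+z. ennreal \<kappa> * (ennreal (W (fst z) * a1 (fst z) * a2 (snd z) * a3 (\<xi> - fst z - snd z))
         + ennreal (a1 (fst z) * W (snd z) * a2 (snd z) * a3 (\<xi> - fst z - snd z))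
         + ennreal (a1 (fst z) * a2 (snd z) * (W (\<xi> - fst z - snd z) * a3 (\<xi> - fst z - snd z)))) \<partial>CS)"
    proof (rule nn_integral_mono)
      fix z :: "(int^'d) \<times> (int^'d)"
      obtain p q where z: "z = (p, q)" by fastforce
      define r where "r = \<xi> - p - q"
      have xi: "\<xi> = p + q + r" unfolding r_def by simp
      have P: "a1 p * a2 q * a3 r \<ge> 0" using a1 a2 a3 by simp
      have "W \<xi> * (a1 p * a2 q * a3 r) \<le> \<kappa> * (W p + W q + W r) * (a1 p * a2 q * a3 r)"
        unfolding xi by (rule mult_right_mono[OF Wtri P])
      also have "\<dots> = \<kappa> * (W p * a1 p * a2 q * a3 r + a1 p * W q * a2 q * a3 r + a1 p * a2 q * (W r * a3 r))"
        by (simp add: algebra_simps)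
      finally have "ennreal (W \<xi> * (a1 p * a2 q * a3 r)) \<le> ennreal (\<kappa> * (W p * a1 p * a2 q * a3 r + a1 p * W q * a2 q * a3 r + a1 p * a2 q * (W r * a3 r)))"
        by (rule ennreal_leI)
      also have "\<dots> = ennreal \<kappa> * (ennreal (W p * a1 p * a2 q * a3 r) + ennreal (a1 p * W q * a2 q * a3 r) + ennreal (a1 p * a2 q * (W r * a3 r)))"
      proof -
        have X: "W p * a1 p * a2 q * a3 r \<ge> 0" "a1 p * W q * a2 q * a3 r \<ge> 0" "a1 p * a2 q * (W r * a3 r) \<ge> 0"
          using Wnn a1 a2 a3 by simp_all
        have "ennreal (\<kappa> * (W p * a1 p * a2 q * a3 r + a1 p * W q * a2 q * a3 r + a1 p * a2 q * (W r * a3 r)))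
          = ennreal \<kappa> * ennreal (W p * a1 p * a2 q * a3 r + a1 p * W q * a2 q * a3 r + a1 p * a2 q * (W r * a3 r))"
          by (rule ennreal_mult) (use \<kappa> X in auto)
        also have "ennreal (W p * a1 p * a2 q * a3 r + a1 p * W q * a2 q * a3 r + a1 p * a2 q * (W r * a3 r))
          = ennreal (W p * a1 p * a2 q * a3 r) + ennreal (a1 p * W q * a2 q * a3 r) + ennreal (a1 p * a2 q * (W r * a3 r))"
          using X by (simp only: ennreal_plus add_nonneg_nonneg)
        finally show ?thesis .
      qed
      finally show "ennreal (W \<xi> * (a1 (fst z) * a2 (snd z) * a3 (\<xi> - fst z - snd z))) \<le> ennreal \<kappa> * (ennreal (W (fst z) * a1 (fst z) * a2 (snd z) * a3 (\<xi> - fst z - snd z))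
         + ennreal (a1 (fst z) * W (snd z) * a2 (snd z) * a3 (\<xi> - fst z - snd z))
         + ennreal (a1 (fst z) * a2 (snd z) * (W (\<xi> - fst z - snd z) * a3 (\<xi> - fst z - snd z))))"
        unfolding z r_def by simp
    qed
    also have "\<dots> = ennreal \<kappa> * (h1 \<xi> + h2 \<xi> + h3 \<xi>)"
      unfolding h1_def h2_def h3_def by (simp add: nn_integral_cmult nn_integral_add)
    finally show ?thesis .
  qed
  have step2: "ennreal ((W \<xi>)^2) * (conv \<xi>)^2 \<le> ennreal (3 * \<kappa>^2) * ((h1 \<xi>)^2 + (h2 \<xi>)^2 + (h3 \<xi>)^2)" for \<xi>
  proof -
    have "ennreal ((W \<xi>)^2) * (conv \<xi>)^2 = (ennreal (W \<xi>) * conv \<xi>)^2"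
      using Wnn by (simp add: ennreal_power power_mult_distrib)
    also have "\<dots> \<le> (ennreal \<kappa> * (h1 \<xi> + h2 \<xi> + h3 \<xi>))^2"
      by (rule power_mono[OF step1]) simp
    also have "\<dots> = (ennreal \<kappa>)^2 * (h1 \<xi> + h2 \<xi> + h3 \<xi>)^2" by (simp add: power_mult_distrib)
    also have "\<dots> \<le> (ennreal \<kappa>)^2 * (3 * ((h1 \<xi>)^2 + (h2 \<xi>)^2 + (h3 \<xi>)^2))"
      by (intro mult_left_mono sq3_ennreal) simp
    also have "\<dots> = ennreal (3 * \<kappa>^2) * ((h1 \<xi>)^2 + (h2 \<xi>)^2 + (h3 \<xi>)^2)"
      using \<kappa> by (simp add: ennreal_power ennreal_mult mult_ac distrib_left)
    finally show ?thesis .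
  qed
  have L1: "\<And>a. (\<And>x. a x \<ge> 0) \<Longrightarrow> (\<integral>\<^sup>+x. ennreal (a x) \<partial>CS)^2 \<le> S * (\<integral>\<^sup>+x. ennreal ((W x)^2 * (a x)^2) \<partial>CS)"
    unfolding S_def using L1_bound W by blast
  have NA: "\<And>a. (\<integral>\<^sup>+x. ennreal ((W x * a x)^2) \<partial>CS) = (\<integral>\<^sup>+x. ennreal ((W x)^2 * (a x)^2) \<partial>CS)"
    by (simp add: power_mult_distrib)
  have Y1: "(\<integral>\<^sup>+\<xi>. (h1 \<xi>)^2 \<partial>CS) \<le> N1 * ((S * N2) * (S * N3))"
  proof -
    have "h1 \<xi> = (\<integral>\<^sup>+z. ennreal ((\<lambda>x. W x * a1 x) (\<xi> - fst z - snd z) * a2 (fst z) * a3 (snd z)) \<partial>CS)" for \<xi>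
    proof -
      have b: "bij (\<lambda>(q, r). (\<xi> - q - r, q :: int^'d))"
        by (rule bij_betwI[where g="\<lambda>(p, q). (q, \<xi> - p - q)"]) auto
      have "h1 \<xi> = (\<integral>\<^sup>+z. (\<lambda>z. ennreal (W (fst z) * a1 (fst z) * a2 (snd z) * a3 (\<xi> - fst z - snd z))) ((\<lambda>(q, r). (\<xi> - q - r, q :: int^'d)) z) \<partial>CS)"
        unfolding h1_def by (rule pair_reindex[OF b, symmetric])
      also have "\<dots> = (\<integral>\<^sup>+z. ennreal ((\<lambda>x. W x * a1 x) (\<xi> - fst z - snd z) * a2 (fst z) * a3 (snd z)) \<partial>CS)"
        by (rule nn_integral_cong) (simp add: case_prod_beta mult_ac)
      finally show ?thesis .
    qed
    then have "(\<integral>\<^sup>+\<xi>. (h1 \<xi>)^2 \<partial>CS) \<le> (\<integral>\<^sup>+x. ennreal ((W x * a1 x)^2) \<partial>CS) * ((\<integral>\<^sup>+x. ennreal (a2 x) \<partial>CS)^2 * (\<integral>\<^sup>+x. ennreal (a3 x) \<partial>CS)^2)"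
      using young[of "\<lambda>x. W x * a1 x" a2 a3] Wnn a1 a2 a3 by simp
    also have "\<dots> \<le> N1 * ((S * N2) * (S * N3))"
      unfolding NA N1_def N2_def N3_def by (intro mult_mono L1 a1 a2 a3) auto
    finally show ?thesis .
  qed
  have Y2: "(\<integral>\<^sup>+\<xi>. (h2 \<xi>)^2 \<partial>CS) \<le> N2 * ((S * N1) * (S * N3))"
  proof -
    have "h2 \<xi> = (\<integral>\<^sup>+z. ennreal ((\<lambda>x. W x * a2 x) (\<xi> - fst z - snd z) * a1 (fst z) * a3 (snd z)) \<partial>CS)" for \<xi>
    proof -
      have b: "bij (\<lambda>(p, r). (p, \<xi> - p - r :: int^'d))"
        by (rule bij_betwI[where g="\<lambda>(p, q). (p, \<xi> - p - q)"]) auto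
      have "h2 \<xi> = (\<integral>\<^sup>+z. (\<lambda>z. ennreal (a1 (fst z) * W (snd z) * a2 (snd z) * a3 (\<xi> - fst z - snd z))) ((\<lambda>(p, r). (p, \<xi> - p - r :: int^'d)) z) \<partial>CS)"
        unfolding h2_def by (rule pair_reindex[OF b, symmetric])
      also have "\<dots> = (\<integral>\<^sup>+z. ennreal ((\<lambda>x. W x * a2 x) (\<xi> - fst z - snd z) * a1 (fst z) * a3 (snd z)) \<partial>CS)"
        by (rule nn_integral_cong) (simp add: case_prod_beta mult_ac)
      finally show ?thesis .
    qed
    then have "(\<integral>\<^sup>+\<xi>. (h2 \<xi>)^2 \<partial>CS) \<le> (\<integral>\<^sup>+x. ennreal ((W x * a2 x)^2) \<partial>CS) * ((\<integral>\<^sup>+x. ennreal (a1 x) \<partial>CS)^2 * (\<integral>\<^sup>+x. ennreal (a3 x) \<partial>CS)^2)"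
      using young[of "\<lambda>x. W x * a2 x" a1 a3] Wnn a1 a2 a3 by simp
    also have "\<dots> \<le> N2 * ((S * N1) * (S * N3))"
      unfolding NA N1_def N2_def N3_def by (intro mult_mono L1 a1 a2 a3) auto
    finally show ?thesis .
  qed
  have Y3: "(\<integral>\<^sup>+\<xi>. (h3 \<xi>)^2 \<partial>CS) \<le> N3 * ((S * N1) * (S * N2))"
  proof -
    have "h3 \<xi> = (\<integral>\<^sup>+z. ennreal ((\<lambda>x. W x * a3 x) (\<xi> - fst z - snd z) * a1 (fst z) * a2 (snd z)) \<partial>CS)" for \<xi>
      unfolding h3_def by (simp add: mult_ac)
    then have "(\<integral>\<^sup>+\<xi>. (h3 \<xi>)^2 \<partial>CS) \<le> (\<integral>\<^sup>+x. ennreal ((W x * a3 x)^2) \<partial>CS) * ((\<integral>\<^sup>+x. ennreal (a1 x) \<partial>CS)^2 * (\<integral>\<^sup>+x. ennreal (a2 x) \<partial>CS)^2)"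
      using young[of "\<lambda>x. W x * a3 x" a1 a2] Wnn a1 a2 a3 by simp
    also have "\<dots> \<le> N3 * ((S * N1) * (S * N2))"
      unfolding NA N1_def N2_def N3_def by (intro mult_mono L1 a1 a2 a3) auto
    finally show ?thesis .
  qed
  have "(\<integral>\<^sup>+\<xi>. ennreal ((W \<xi>)^2) * (conv \<xi>)^2 \<partial>CS) \<le> (\<integral>\<^sup>+\<xi>. ennreal (3 * \<kappa>^2) * ((h1 \<xi>)^2 + (h2 \<xi>)^2 + (h3 \<xi>)^2) \<partial>CS)"
    by (intro nn_integral_mono step2)
  also have "\<dots> = ennreal (3 * \<kappa>^2) * ((\<integral>\<^sup>+\<xi>. (h1 \<xi>)^2 \<partial>CS) + (\<integral>\<^sup>+\<xi>. (h2 \<xi>)^2 \<partial>CS) + (\<integral>\<^sup>+\<xi>. (h3 \<xi>)^2 \<partial>CS))"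
    by (simp add: nn_integral_cmult nn_integral_add)
  also have "\<dots> \<le> ennreal (3 * \<kappa>^2) * (N1 * ((S * N2) * (S * N3)) + N2 * ((S * N1) * (S * N3)) + N3 * ((S * N1) * (S * N2)))"
    by (intro mult_left_mono add_mono Y1 Y2 Y3) simp
  also have "\<dots> = ennreal (3 * \<kappa>^2) * (3 * (S^2 * (N1 * N2 * N3)))"
  proof -
    have t: "(3::ennreal) = 1 + 1 + 1" by simp
    show ?thesis unfolding t power2_eq_square distrib_left distrib_right mult_1 by (simp only: ac_simps)
  qed
  also have "\<dots> = ennreal (9 * \<kappa>^2) * (S^2 * (N1 * N2 * N3))"
  proof -
    have "ennreal (9 * \<kappa>^2) = ennreal (3 * \<kappa>^2) * 3"
      using ennreal_mult[of "3 * \<kappa>^2" 3] by simp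
    then show ?thesis by (simp add: mult_ac)
  qed
  finally show ?thesis unfolding conv_def S_def N1_def N2_def N3_def .
qed




lemma sum1d_nat:
  assumes s: "\<sigma> > 1/2"
  shows "(\<lambda>n::nat. (1 + (real n)^2) powr (-\<sigma>)) summable_on UNIV"
proof -
  have "summable (\<lambda>n. real n powr (-2*\<sigma>))" using s by (subst summable_real_powr_iff) simp
  then have "summable (\<lambda>n. real (Suc n) powr (-2*\<sigma>))" by (subst summable_Suc_iff)
  then have "summable (\<lambda>n. 2 powr \<sigma> * real (Suc n) powr (-2*\<sigma>))" by (rule summable_mult)
  then have sm: "(\<lambda>n. 2 powr \<sigma> * real (Suc n) powr (-2*\<sigma>)) summable_on UNIV"
    by (rule summable_nonneg_imp_summable_on) simp
  show ?thesis
  proof (rule summable_on_comparison_test[OF sm])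
    fix n :: nat
    have le: "(1 + real n)^2 / 2 \<le> 1 + (real n)^2"
    proof -
      have "0 \<le> (real n - 1)^2" by simp
      then show ?thesis by (simp add: power2_eq_square algebra_simps)
    qed
    have "(1 + (real n)^2) powr (-\<sigma>) \<le> ((1 + real n)^2 / 2) powr (-\<sigma>)"
      by (rule powr_mono2'[OF _ _ le]) (use s in auto)
    also have "\<dots> = ((1 + real n) powr 2) powr (-\<sigma>) / 2 powr (-\<sigma>)"
      by (simp add: powr_divide powr_realpow)
    also have "\<dots> = 2 powr \<sigma> * real (Suc n) powr (-2*\<sigma>)"
    proof -
      have "((1 + real n) powr 2) powr (-\<sigma>) = real (Suc n) powr (-2*\<sigma>)"
        by (simp only: powr_powr) (simp add: add.commute)
      moreover have "1 / 2 powr (-\<sigma>) = 2 powr \<sigma>" by (simp add: powr_minus divide_inverse)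
      ultimately show ?thesis by (simp add: divide_inverse powr_minus mult.commute)
    qed
    finally show "(1 + (real n)^2) powr (-\<sigma>) \<le> 2 powr \<sigma> * real (Suc n) powr (-2*\<sigma>)" .
  qed simp
qed

lemma sum1d_int:
  assumes s: "\<sigma> > 1/2"
  shows "(\<lambda>k::int. (1 + (real_of_int k)^2) powr (-\<sigma>)) summable_on UNIV"
proof -
  define g where "g k = (1 + (real_of_int k)^2) powr (-\<sigma>)" for k :: int
  have "(g \<circ> int) summable_on UNIV" using sum1d_nat[OF s] by (simp add: g_def o_def)
  then have A: "g summable_on (int ` UNIV)" by (subst summable_on_reindex) auto
  have "(g \<circ> uminus \<circ> int) summable_on UNIV" using sum1d_nat[OF s] by (simp add: g_def o_def)
  then have "(g \<circ> uminus) summable_on (int ` UNIV)" by (subst summable_on_reindex) (auto simp: o_assoc)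
  then have B: "g summable_on (uminus ` int ` UNIV)" by (subst summable_on_reindex) auto
  have U: "UNIV = int ` UNIV \<union> uminus ` int ` UNIV"
  proof -
    have "k \<in> int ` UNIV \<union> uminus ` int ` UNIV" for k :: int
    proof (cases "k \<ge> 0")
      case True
      then have "k = int (nat k)" by simp
      then show ?thesis by blast
    next
      case False
      then have "k = - int (nat (-k))" by simp
      then show ?thesis by blast
    qed
    then show ?thesis by blast
  qed
  show ?thesis unfolding g_def[symmetric] by (subst U) (rule summable_on_union[OF A B])
qed

lemma nsq_ge_comp: "real_of_int ((x::int^'d) $ i) ^ 2 \<le> real_of_int (nsq x)"
proof -
  have "(x $ i) * (x $ i) \<le> (\<Sum>j\<in>UNIV. x $ j * x $ j)"
    by (rule member_le_sum) auto
  then have "(x $ i)^2 \<le> nsq x" unfolding nsq_def idot_def by (simp add: power2_eq_square)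
  then show ?thesis by (metis of_int_le_iff of_int_power)
qed

lemma nsq_nonneg: "nsq (x::int^'d) \<ge> 0"
  unfolding nsq_def idot_def by (auto intro!: sum_nonneg)

lemma lattice_sum:
  assumes g: "\<gamma> > real CARD('d) / 2"
  shows "(\<lambda>x::int^'d. (1 + real_of_int (nsq x)) powr (-\<gamma>)) summable_on UNIV"
proof -
  define d where "d = real CARD('d)"
  have d0: "d > 0" unfolding d_def by simp
  define \<sigma> where "\<sigma> = \<gamma> / d"
  have s: "\<sigma> > 1/2" using g d0 unfolding \<sigma>_def d_def by (simp add: field_simps)
  define G where "G k = (1 + (real_of_int k)^2) powr (-\<sigma>)" for k :: int
  have Gnn: "G k \<ge> 0" for k unfolding G_def by simp
  have G1: "G summable_on UNIV" unfolding G_def by (rule sum1d_int[OF s])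
  have "Infinite_Sum.abs_summable_on G UNIV" using G1 Gnn by simp
  then have "Infinite_Set_Sum.abs_summable_on G UNIV" by (rule abs_summable_equivalent[THEN iffD1])
  then have "Infinite_Set_Sum.abs_summable_on (\<lambda>h. \<Prod>i\<in>(UNIV::'d set). G (h i)) (PiE UNIV (\<lambda>_. UNIV))"
    by (intro abs_summable_on_prod_PiE) auto
  then have "Infinite_Sum.abs_summable_on (\<lambda>h. \<Prod>i\<in>(UNIV::'d set). G (h i)) UNIV"
    by (intro abs_summable_equivalent[THEN iffD2]) (simp add: PiE_UNIV)
  then have P: "(\<lambda>h. \<Prod>i\<in>(UNIV::'d set). G (h i)) summable_on UNIV"
    using Gnn by (simp add: prod_nonneg)
  have "(\<lambda>h. \<Prod>i\<in>(UNIV::'d set). G (h i)) summable_on (vec_nth ` (UNIV :: (int^'d) set))"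
  proof -
    have "vec_nth ` (UNIV :: (int^'d) set) = UNIV"
      by (metis surj_def vec_lambda_inverse UNIV_I)
    then show ?thesis using P by simp
  qed
  then have "((\<lambda>h. \<Prod>i\<in>(UNIV::'d set). G (h i)) \<circ> vec_nth) summable_on (UNIV :: (int^'d) set)"
    by (subst (asm) summable_on_reindex) (auto simp: inj_on_def vec_eq_iff)
  then have P2: "(\<lambda>x::int^'d. \<Prod>i\<in>UNIV. G (x $ i)) summable_on UNIV" by (simp add: o_def)
  show ?thesis
  proof (rule summable_on_comparison_test[OF P2])
    fix x :: "int^'d"
    define n where "n = real_of_int (nsq x)"
    have n0: "n \<ge> 0" unfolding n_def using nsq_nonneg[of x] by simp
    have pr: "(\<Prod>i\<in>UNIV. (1 + (real_of_int (x $ i))^2)) \<le> (\<Prod>i\<in>(UNIV::'d set). 1 + n)"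
      by (rule prod_mono) (use nsq_ge_comp[of x] in \<open>auto simp: n_def\<close>)
    have pp: "0 < (\<Prod>i\<in>(UNIV::'d set). (1 + (real_of_int (x $ i))^2))"
      by (rule prod_pos) (auto intro: add_pos_nonneg)
    have "(1 + n) powr (-\<gamma>) = ((1 + n) powr d) powr (-\<sigma>)"
      unfolding \<sigma>_def using d0 by (simp add: powr_powr)
    also have "(1 + n) powr d = (\<Prod>i\<in>(UNIV::'d set). 1 + n)"
      unfolding d_def using n0 by (simp add: powr_realpow)
    also have "(\<Prod>i\<in>(UNIV::'d set). 1 + n) powr (-\<sigma>) \<le> (\<Prod>i\<in>UNIV. (1 + (real_of_int (x $ i))^2)) powr (-\<sigma>)"
      by (rule powr_mono2'[OF _ pp pr]) (use s in auto)
    also have "\<dots> = (\<Prod>i\<in>UNIV. G (x $ i))"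
      unfolding G_def by (rule prod_powr_distrib)
    finally show "(1 + real_of_int (nsq x)) powr (-\<gamma>) \<le> (\<Prod>i\<in>UNIV. G (x $ i))" unfolding n_def .
  qed simp
qed




lemma nn_eq_infsum:
  fixes f :: "'a \<Rightarrow> real"
  assumes nn: "\<And>x. f x \<ge> 0" and sm: "f summable_on UNIV"
  shows "(\<integral>\<^sup>+x. ennreal (f x) \<partial>count_space UNIV) = ennreal (infsum f UNIV)"
proof -
  have "Infinite_Sum.abs_summable_on f UNIV" using sm nn by simp
  then have a: "Infinite_Set_Sum.abs_summable_on f UNIV" by (rule abs_summable_equivalent[THEN iffD1])
  have "(\<integral>\<^sup>+x. ennreal (f x) \<partial>count_space UNIV) = ennreal (infsetsum f UNIV)"
    by (rule nn_integral_conv_infsetsum[OF a]) (use nn in auto)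
  also have "infsetsum f UNIV = infsum f UNIV" by (rule infsetsum_infsum[OF a])
  finally show ?thesis .
qed

lemma infsum_of_nn:
  fixes f :: "'a \<Rightarrow> real"
  assumes nn: "\<And>x. f x \<ge> 0" and fin: "(\<integral>\<^sup>+x. ennreal (f x) \<partial>count_space UNIV) < \<infinity>"
  shows "f summable_on UNIV \<and> ennreal (infsum f UNIV) = (\<integral>\<^sup>+x. ennreal (f x) \<partial>count_space UNIV)"
proof -
  have "integrable (count_space UNIV) f"
    by (rule integrableI_nonneg) (use nn fin in auto)
  then have a: "Infinite_Set_Sum.abs_summable_on f UNIV" by (simp add: abs_summable_on_def)
  then have "Infinite_Sum.abs_summable_on f UNIV" by (rule abs_summable_equivalent[THEN iffD2])
  then have sm: "f summable_on UNIV" using nn by simp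
  show ?thesis using sm nn_eq_infsum[OF nn sm] by simp
qed




lemma nsq_sum3: "nsq (p + q + r :: int^'d) \<le> 3 * (nsq p + nsq q + nsq r)"
proof -
  have "(\<Sum>i\<in>UNIV. (p + q + r) $ i * (p + q + r) $ i) \<le> (\<Sum>i\<in>UNIV. 3 * (p $ i * p $ i + q $ i * q $ i + r $ i * r $ i))"
  proof (rule sum_mono)
    fix i
    have "0 \<le> (p$i - q$i)^2 + (q$i - r$i)^2 + (p$i - r$i)^2" by simp
    then show "(p + q + r) $ i * (p + q + r) $ i \<le> 3 * (p $ i * p $ i + q $ i * q $ i + r $ i * r $ i)"
      by (simp add: power2_eq_square algebra_simps)
  qed
  then show ?thesis unfolding nsq_def idot_def by (simp add: sum_distrib_left sum.distrib)
qed

lemma W_tri: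
  assumes g: "\<gamma> \<ge> 0"
  shows "(1 + real_of_int (nsq (p + q + r :: int^'d))) powr (\<gamma>/2) \<le>
    3 powr \<gamma> * ((1 + real_of_int (nsq p)) powr (\<gamma>/2) + (1 + real_of_int (nsq q)) powr (\<gamma>/2) + (1 + real_of_int (nsq r)) powr (\<gamma>/2))"
proof -
  define np where "np = 1 + real_of_int (nsq p)"
  define nq where "nq = 1 + real_of_int (nsq q)"
  define nr where "nr = 1 + real_of_int (nsq r)"
  define m where "m = max (max np nq) nr"
  have pos: "np \<ge> 1" "nq \<ge> 1" "nr \<ge> 1" unfolding np_def nq_def nr_def using nsq_nonneg by (auto simp del: of_int_add)
  have "real_of_int (nsq (p + q + r)) \<le> 3 * (real_of_int (nsq p) + real_of_int (nsq q) + real_of_int (nsq r))"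
    using nsq_sum3[of p q r] by (metis of_int_le_iff of_int_add of_int_mult of_int_numeral)
  then have le: "1 + real_of_int (nsq (p + q + r)) \<le> 9 * m"
    unfolding m_def np_def nq_def nr_def by (auto simp: max_def)
  have "(1 + real_of_int (nsq (p + q + r))) powr (\<gamma>/2) \<le> (9 * m) powr (\<gamma>/2)"
    by (rule powr_mono2) (use g le nsq_nonneg[of "p+q+r"] in auto)
  also have "\<dots> = 9 powr (\<gamma>/2) * m powr (\<gamma>/2)"
    using pos by (simp add: powr_mult m_def)
  also have "9 powr (\<gamma>/2) = 3 powr \<gamma>"
  proof -
    have "(9::real) = 3 powr 2" by simp
    then show ?thesis by (simp add: powr_powr)
  qed
  also have "m powr (\<gamma>/2) \<le> np powr (\<gamma>/2) + nq powr (\<gamma>/2) + nr powr (\<gamma>/2)"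
    unfolding m_def by (auto simp: max_def add_nonneg_nonneg add_increasing add_increasing2)
  finally show ?thesis unfolding np_def nq_def nr_def by (simp add: mult_left_mono)
qed

lemma idot_sq: "(real_of_int (idot (x::int^'d) y))^2 \<le> real_of_int (nsq x) * real_of_int (nsq y)"
proof -
  have "(\<Sum>i\<in>UNIV. real_of_int (x$i) * real_of_int (y$i))^2 \<le> (\<Sum>i\<in>UNIV. (real_of_int (x$i))^2) * (\<Sum>i\<in>UNIV. (real_of_int (y$i))^2)"
    by (rule Cauchy_Schwarz_ineq_sum)
  then show ?thesis unfolding nsq_def idot_def by (simp add: power2_eq_square)
qed

lemma beta_bound:
  fixes p q r :: "int^'d"
  shows "(real_of_int (2 * idot p q + 2 * idot p r + 2 * idot q r))^2 \<le>
    36 * ((1 + real_of_int (nsq p)) * (1 + real_of_int (nsq q)) * (1 + real_of_int (nsq r)))"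
proof -
  define np where "np = real_of_int (nsq p)"
  define nq where "nq = real_of_int (nsq q)"
  define nr where "nr = real_of_int (nsq r)"
  define P where "P = (1 + np) * (1 + nq) * (1 + nr)"
  have n0: "np \<ge> 0" "nq \<ge> 0" "nr \<ge> 0" unfolding np_def nq_def nr_def using nsq_nonneg by auto
  define a where "a = real_of_int (idot p q)"
  define b where "b = real_of_int (idot p r)"
  define c where "c = real_of_int (idot q r)"
  have a: "a^2 \<le> P"
  proof -
    have "a^2 \<le> np * nq" unfolding a_def np_def nq_def by (rule idot_sq)
    also have "\<dots> \<le> (1 + np) * (1 + nq) * (1 + nr)" using n0 by (simp add: algebra_simps mult_nonneg_nonneg add_nonneg_nonneg)
    finally show ?thesis unfolding P_def .
  qed
  have b: "b^2 \<le> P"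
  proof -
    have "b^2 \<le> np * nr" unfolding b_def np_def nr_def by (rule idot_sq)
    also have "\<dots> \<le> (1 + np) * (1 + nq) * (1 + nr)" using n0 by (simp add: algebra_simps mult_nonneg_nonneg add_nonneg_nonneg)
    finally show ?thesis unfolding P_def .
  qed
  have c: "c^2 \<le> P"
  proof -
    have "c^2 \<le> nq * nr" unfolding c_def nq_def nr_def by (rule idot_sq)
    also have "\<dots> \<le> (1 + np) * (1 + nq) * (1 + nr)" using n0 by (simp add: algebra_simps mult_nonneg_nonneg add_nonneg_nonneg)
    finally show ?thesis unfolding P_def .
  qed
  have "(2*a + 2*b + 2*c)^2 \<le> 12 * (a^2 + b^2 + c^2)"
  proof -
    have "0 \<le> (a-b)^2 + (b-c)^2 + (a-c)^2" by simp
    then show ?thesis by (simp add: power2_eq_square algebra_simps)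
  qed
  also have "\<dots> \<le> 36 * P" using a b c by simp
  finally show ?thesis unfolding a_def b_def c_def P_def np_def nq_def nr_def by simp
qed

lemma cont_nls:
  assumes "nls_solution T u"
  shows "continuous_on {0..T} (\<lambda>t. u t \<xi>)"
proof -
  have "continuous (at t within {0..T}) (\<lambda>s. u s \<xi>)" if "t \<in> {0..T}" for t
  proof -
    from assms that obtain D where "((\<lambda>s. u s \<xi>) has_vector_derivative D) (at t within {0..T})"
      unfolding nls_solution_def by blast
    then show ?thesis by (rule has_vector_derivative_continuous)
  qed
  then show ?thesis by (simp add: continuous_on_eq_continuous_within)
qed

lemma point_le_nn:
  fixes f :: "'a \<Rightarrow> ennreal"
  shows "f x \<le> (\<integral>\<^sup>+y. f y \<partial>count_space UNIV)"
proof -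
  have "(\<integral>\<^sup>+y. f x * indicator {x} y \<partial>count_space UNIV) \<le> (\<integral>\<^sup>+y. f y \<partial>count_space UNIV)"
    by (intro nn_integral_mono) (auto split: split_indicator)
  moreover have "(\<integral>\<^sup>+y. f x * indicator {x} y \<partial>count_space UNIV) = f x"
    by (subst nn_integral_cmult_indicator) auto
  ultimately show ?thesis by simp
qed

lemma Linf_nonneg:
  assumes "T > 0"
  shows "Linf_norm T s v \<ge> 0"
proof -
  define M where "M = restrict_space lborel {0<..<T}"
  have sp: "emeasure M (space M) \<noteq> 0"
    unfolding M_def using assms by (simp add: emeasure_restrict_space space_restrict_space)
  have "esssup M (\<lambda>t. ereal 0) \<le> esssup M (\<lambda>t. ereal (hs_norm s (v t)))"
  proof (rule esssup_mono)
    fix t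
    have "0 \<le> (\<Sum>\<^sub>\<infinity>\<xi>. hs_weight s \<xi> * (cmod (v t \<xi>))^2)"
      by (rule infsum_nonneg) (simp add: hs_weight_def)
    then show "ereal 0 \<le> ereal (hs_norm s (v t))" unfolding hs_norm_def by simp
  qed simp
  then have "0 \<le> esssup M (\<lambda>t. ereal (hs_norm s (v t)))" using esssup_const[OF sp, of "ereal 0"] by (simp add: zero_ereal_def)
  then show ?thesis unfolding Linf_norm_def M_def by (simp add: real_of_ereal_pos)
qed





lemma summand_bound:
  fixes c :: "int^'d \<Rightarrow> complex" and p q \<xi> :: "int^'d"
  assumes tau: "\<tau> > 0"
  shows "cmod (let \<xi>3 = \<xi> - p - q;
          tn = real n * \<tau>;
          \<phi>3 = nsq \<xi> + nsq p - nsq q - nsq \<xi>3;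
          \<alpha> = 2 * nsq p;
          \<beta> = 2 * idot p q + 2 * idot p \<xi>3 + 2 * idot q \<xi>3
      in R2 (real_of_int \<alpha>) (real_of_int \<beta>) \<tau> * exp (\<i> * of_real (tn * real_of_int \<phi>3))
         * conj_coeff c p * c q * c \<xi>3)
    \<le> 18 * \<tau>^3 * (((1 + real_of_int (nsq p)) * cmod (conj_coeff c p)) * ((1 + real_of_int (nsq q)) * cmod (c q))
        * ((1 + real_of_int (nsq (\<xi> - p - q))) * cmod (c (\<xi> - p - q))))"
proof -
  define r where "r = \<xi> - p - q"
  define \<beta> where "\<beta> = 2 * idot p q + 2 * idot p r + 2 * idot q r"
  define P where "P = (1 + real_of_int (nsq p)) * (1 + real_of_int (nsq q)) * (1 + real_of_int (nsq r))"
  define Q where "Q = cmod (conj_coeff c p) * cmod (c q) * cmod (c r)"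
  have Q0: "Q \<ge> 0" unfolding Q_def by simp
  have "cmod (R2 (real_of_int (2 * nsq p)) (real_of_int \<beta>) \<tau>) \<le> \<tau>^3 * (real_of_int \<beta>)^2 / 2"
    by (rule R2_bound[OF tau])
  also have "\<dots> \<le> \<tau>^3 * (36 * P) / 2"
    using beta_bound[of p q r] tau unfolding \<beta>_def P_def by (intro divide_right_mono mult_left_mono) auto
  finally have R: "cmod (R2 (real_of_int (2 * nsq p)) (real_of_int \<beta>) \<tau>) \<le> 18 * \<tau>^3 * P" by (simp add: mult_ac)
  have "cmod (R2 (real_of_int (2 * nsq p)) (real_of_int \<beta>) \<tau> * exp (\<i> * of_real (real n * \<tau> * real_of_int (nsq \<xi> + nsq p - nsq q - nsq r)))
         * conj_coeff c p * c q * c r) = cmod (R2 (real_of_int (2 * nsq p)) (real_of_int \<beta>) \<tau>) * Q"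
    unfolding Q_def by (simp add: norm_mult)
  also have "\<dots> \<le> 18 * \<tau>^3 * P * Q" by (rule mult_right_mono[OF R Q0])
  finally show ?thesis unfolding r_def \<beta>_def P_def Q_def Let_def by (simp add: mult_ac)
qed

theorem lemma3p3:
  fixes \<gamma> :: real
  assumes "\<gamma> > real CARD('d) / 2"
  shows "\<exists>C. \<forall>(T::real) (u :: real \<Rightarrow> int^'d \<Rightarrow> complex) v (\<tau>::real) (n::nat).
           T > 0 \<and> \<tau> > 0 \<and> real n * \<tau> \<le> T \<and> nls_solution T u \<and>
           v = (\<lambda>t \<xi>. exp (\<i> * of_real (t * real_of_int (nsq \<xi>))) * u t \<xi>) \<and>
           Linf_mem T (\<gamma> + 2) v
           \<longrightarrow> in_Hs \<gamma> (R5 \<tau> n v) \<and>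
               hs_norm \<gamma> (R5 \<tau> n v) \<le> C * \<tau>^3 * (Linf_norm T (\<gamma> + 2) v)^3"
proof -
  have g0: "\<gamma> > 0"
  proof -
    have "real CARD('d) / 2 > 0" by simp
    then show ?thesis using assms by linarith
  qed
  define W where "W x = (1 + real_of_int (nsq x)) powr (\<gamma>/2)" for x :: "int^'d"
  have n0: "1 + real_of_int (nsq x) > 0" for x :: "int^'d" using nsq_nonneg[of x] by linarith
  have Wpos: "W x > 0" for x unfolding W_def using n0[of x] by simp
  have W2: "(W x)^2 = hs_weight \<gamma> x" for x
    unfolding W_def hs_weight_def using n0[of x] by (simp add: power2_eq_square powr_add[symmetric])
  have Winv: "1 / (W x)^2 = (1 + real_of_int (nsq x)) powr (-\<gamma>)" for x
    unfolding W2 hs_weight_def by (simp add: powr_minus_divide)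
  define Sr where "Sr = infsum (\<lambda>x::int^'d. (1 + real_of_int (nsq x)) powr (-\<gamma>)) UNIV"
  have S: "(\<integral>\<^sup>+x. ennreal (1 / (W x)^2) \<partial>CS) = ennreal Sr"
    unfolding Winv Sr_def by (rule nn_eq_infsum[OF _ lattice_sum[OF assms]]) simp
  have Sr0: "Sr \<ge> 0" unfolding Sr_def by (rule infsum_nonneg) simp
  define \<kappa> where "\<kappa> = 3 powr \<gamma>"
  have k0: "\<kappa> \<ge> 0" unfolding \<kappa>_def by simp
  define K0 where "K0 = 9 * \<kappa>^2"
  have K00: "K0 \<ge> 0" unfolding K0_def by simp
  define C where "C = 18 * sqrt K0 * Sr / (2*pi)^CARD('d)"
  have Wtri: "W (p + q + r) \<le> \<kappa> * (W p + W q + W r)" for p q r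
    unfolding W_def \<kappa>_def by (rule W_tri) (use g0 in simp)
  show ?thesis
  proof (intro exI[of _ C] allI impI)
    fix T :: real and u :: "real \<Rightarrow> int^'d \<Rightarrow> complex" and v \<tau> and n :: nat
    assume H: "T > 0 \<and> \<tau> > 0 \<and> real n * \<tau> \<le> T \<and> nls_solution T u \<and>
           v = (\<lambda>t \<xi>. exp (\<i> * of_real (t * real_of_int (nsq \<xi>))) * u t \<xi>) \<and>
           Linf_mem T (\<gamma> + 2) v"
    then have T: "T > 0" and tau: "\<tau> > 0" and nT: "real n * \<tau> \<le> T" and sol: "nls_solution T u"
      and vdef: "v = (\<lambda>t \<xi>. exp (\<i> * of_real (t * real_of_int (nsq \<xi>))) * u t \<xi>)"
      and mem: "Linf_mem T (\<gamma> + 2) v" by auto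
    define t0 where "t0 = real n * \<tau>"
    have t0: "t0 \<in> {0..T}" unfolding t0_def using nT tau by simp
    have cont: "continuous_on {0..T} (\<lambda>t. v t \<xi>)" for \<xi>
      unfolding vdef by (intro continuous_intros cont_nls[OF sol])
    define c where "c = v t0"
    define L where "L = Linf_norm T (\<gamma> + 2) v"
    have L0: "L \<ge> 0" unfolding L_def by (rule Linf_nonneg[OF T])
    define Nr where "Nr = (\<Sum>\<^sub>\<infinity>\<xi>. hs_weight (\<gamma> + 2) \<xi> * (cmod (c \<xi>))^2)"
    from reg[OF T cont mem t0]
    have smc: "(\<lambda>\<xi>. hs_weight (\<gamma> + 2) \<xi> * (cmod (c \<xi>))^2) summable_on UNIV"
      and NrL: "(2*pi)^CARD('d) * Nr \<le> L^2" unfolding c_def Nr_def L_def by auto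
    have Nr0: "Nr \<ge> 0" unfolding Nr_def by (rule infsum_nonneg) (simp add: hs_weight_def)
    define a where "a \<xi> = (1 + real_of_int (nsq \<xi>)) * cmod (c \<xi>)" for \<xi>
    define b where "b \<xi> = (1 + real_of_int (nsq \<xi>)) * cmod (conj_coeff c \<xi>)" for \<xi>
    have a0: "a x \<ge> 0" for x unfolding a_def using n0[of x] by simp
    have b0: "b x \<ge> 0" for x unfolding b_def using n0[of x] by simp
    have Wa: "(W x)^2 * (a x)^2 = hs_weight (\<gamma> + 2) x * (cmod (c x))^2" for x
    proof -
      have "(W x)^2 * (a x)^2 = ((1 + real_of_int (nsq x)) powr \<gamma> * (1 + real_of_int (nsq x)) powr 2) * (cmod (c x))^2"
        unfolding W2 a_def hs_weight_def using n0[of x] by (simp add: power_mult_distrib powr_realpow)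
      also have "\<dots> = hs_weight (\<gamma> + 2) x * (cmod (c x))^2"
        unfolding hs_weight_def by (simp add: powr_add)
      finally show ?thesis .
    qed
    have nsq_neg: "nsq (-x) = nsq x" for x :: "int^'d" unfolding nsq_def idot_def by simp
    have Na: "(\<integral>\<^sup>+x. ennreal ((W x)^2 * (a x)^2) \<partial>CS) = ennreal Nr"
      unfolding Wa Nr_def by (rule nn_eq_infsum[OF _ smc]) (simp add: hs_weight_def)
    have Nb: "(\<integral>\<^sup>+x. ennreal ((W x)^2 * (b x)^2) \<partial>CS) = ennreal Nr"
    proof -
      have "(\<integral>\<^sup>+x. ennreal ((W x)^2 * (b x)^2) \<partial>CS) = (\<integral>\<^sup>+x. (\<lambda>y. ennreal ((W y)^2 * (a y)^2)) (uminus x) \<partial>CS)"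
        by (rule nn_integral_cong) (simp add: W_def a_def b_def conj_coeff_def nsq_neg)
      also have "\<dots> = (\<integral>\<^sup>+x. ennreal ((W x)^2 * (a x)^2) \<partial>CS)"
        by (rule nn_integral_bij_count_space) (rule bij_betwI[where g=uminus], auto)
      finally show ?thesis using Na by simp
    qed
    define conv where "conv \<xi> = (\<integral>\<^sup>+z. ennreal (b (fst z) * a (snd z) * a (\<xi> - fst z - snd z)) \<partial>CS)" for \<xi>
    define Bd where "Bd = K0 * (Sr^2 * (Nr * Nr * Nr))"
    have Bd0: "Bd \<ge> 0" unfolding Bd_def using K00 Nr0 by simp
    have tri: "(\<integral>\<^sup>+\<xi>. ennreal ((W \<xi>)^2) * (conv \<xi>)^2 \<partial>CS) \<le> ennreal Bd"
    proof -
      have "(\<integral>\<^sup>+\<xi>. ennreal ((W \<xi>)^2) * (conv \<xi>)^2 \<partial>CS) \<le> ennreal (9 * \<kappa>^2) * ((ennreal Sr)^2 * (ennreal Nr * ennreal Nr * ennreal Nr))"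
        using tri_generic[of W \<kappa> b a a, OF Wpos k0 Wtri b0 a0 a0] unfolding conv_def S Na Nb .
      also have "\<dots> = ennreal Bd"
        unfolding Bd_def K0_def using Sr0 Nr0 k0 by (simp add: ennreal_mult ennreal_power)
      finally show ?thesis .
    qed
    have conv_fin: "conv \<xi> < \<infinity>" for \<xi>
    proof -
      have "ennreal ((W \<xi>)^2) * (conv \<xi>)^2 \<le> ennreal Bd"
        using point_le_nn[of "\<lambda>\<xi>. ennreal ((W \<xi>)^2) * (conv \<xi>)^2" \<xi>] tri by simp
      then have "ennreal ((W \<xi>)^2) * (conv \<xi>)^2 < \<infinity>" using le_less_trans by fastforce
      moreover have "ennreal ((W \<xi>)^2) \<noteq> 0" using Wpos[of \<xi>] by simp
      ultimately have "(conv \<xi>)^2 < \<infinity>" by (auto simp: ennreal_mult_less_top)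
      then show ?thesis by (simp add: power_less_top_ennreal)
    qed
    define F where "F \<xi> z = 18 * \<tau>^3 * (b (fst z) * a (snd z) * a (\<xi> - fst z - snd z))" for \<xi> z
    have F0: "F \<xi> z \<ge> 0" for \<xi> z unfolding F_def using a0 b0 tau by simp
    have Fint: "(\<integral>\<^sup>+z. ennreal (F \<xi> z) \<partial>CS) = ennreal (18 * \<tau>^3) * conv \<xi>" for \<xi>
    proof -
      have "(\<integral>\<^sup>+z. ennreal (F \<xi> z) \<partial>CS) = (\<integral>\<^sup>+z. ennreal (18 * \<tau>^3) * ennreal (b (fst z) * a (snd z) * a (\<xi> - fst z - snd z)) \<partial>CS)"
        unfolding F_def using a0 b0 tau by (intro nn_integral_cong) (simp add: ennreal_mult)
      also have "\<dots> = ennreal (18 * \<tau>^3) * conv \<xi>" unfolding conv_def by (simp add: nn_integral_cmult)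
      finally show ?thesis .
    qed
    have Fsm: "F \<xi> summable_on UNIV" and FinfS: "ennreal (infsum (F \<xi>) UNIV) = ennreal (18 * \<tau>^3) * conv \<xi>" for \<xi>
    proof -
      have "(\<integral>\<^sup>+z. ennreal (F \<xi> z) \<partial>CS) < \<infinity>" unfolding Fint using conv_fin[of \<xi>]
        by (simp add: ennreal_mult_less_top)
      from infsum_of_nn[OF F0 this] Fint
      show "F \<xi> summable_on UNIV" "ennreal (infsum (F \<xi>) UNIV) = ennreal (18 * \<tau>^3) * conv \<xi>" by auto
    qed
    define summ where "summ \<xi> = (\<lambda>(\<xi>1, \<xi>2).
     (let \<xi>3 = \<xi> - \<xi>1 - \<xi>2;
          tn = real n * \<tau>;
          \<phi>3 = nsq \<xi> + nsq \<xi>1 - nsq \<xi>2 - nsq \<xi>3;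
          \<alpha> = 2 * nsq \<xi>1;
          \<beta> = 2 * idot \<xi>1 \<xi>2 + 2 * idot \<xi>1 \<xi>3 + 2 * idot \<xi>2 \<xi>3
      in R2 (real_of_int \<alpha>) (real_of_int \<beta>) \<tau> * exp (\<i> * of_real (tn * real_of_int \<phi>3))
         * conj_coeff (v tn) \<xi>1 * v tn \<xi>2 * v tn \<xi>3))" for \<xi>
    have R5eq: "R5 \<tau> n v \<xi> = infsum (summ \<xi>) UNIV" for \<xi> unfolding R5_def summ_def ..
    have nb: "norm (summ \<xi> z) \<le> F \<xi> z" for \<xi> z
    proof -
      obtain p q where z: "z = (p, q)" by fastforce
      show ?thesis
        using summand_bound[OF tau, of \<xi> p q n c]
        unfolding z summ_def F_def a_def b_def c_def t0_def Let_def by simp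
    qed
    have R5le: "norm (R5 \<tau> n v \<xi>) \<le> infsum (F \<xi>) UNIV" for \<xi>
    proof -
      have smn: "(\<lambda>z. norm (summ \<xi> z)) summable_on UNIV"
        by (rule summable_on_comparison_test[OF Fsm[of \<xi>]]) (use nb in auto)
      have "norm (R5 \<tau> n v \<xi>) \<le> infsum (\<lambda>z. norm (summ \<xi> z)) UNIV"
        unfolding R5eq by (rule norm_infsum_bound[OF smn])
      also have "\<dots> \<le> infsum (F \<xi>) UNIV" by (rule infsum_mono[OF smn Fsm]) (use nb in auto)
      finally show ?thesis .
    qed
    have pw: "ennreal (hs_weight \<gamma> \<xi> * (cmod (R5 \<tau> n v \<xi>))^2) \<le> ennreal ((18 * \<tau>^3)^2) * (ennreal ((W \<xi>)^2) * (conv \<xi>)^2)" for \<xi>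
    proof -
      have "hs_weight \<gamma> \<xi> * (cmod (R5 \<tau> n v \<xi>))^2 \<le> (W \<xi>)^2 * (infsum (F \<xi>) UNIV)^2"
        unfolding W2 by (intro mult_left_mono power_mono R5le) (auto simp: hs_weight_def)
      then have "ennreal (hs_weight \<gamma> \<xi> * (cmod (R5 \<tau> n v \<xi>))^2) \<le> ennreal ((W \<xi>)^2 * (infsum (F \<xi>) UNIV)^2)"
        by (rule ennreal_leI)
      also have "\<dots> = ennreal ((W \<xi>)^2) * (ennreal (infsum (F \<xi>) UNIV))^2"
        by (simp add: ennreal_mult ennreal_power infsum_nonneg F0)
      also have "\<dots> = ennreal ((18 * \<tau>^3)^2) * (ennreal ((W \<xi>)^2) * (conv \<xi>)^2)"
        unfolding FinfS using tau by (simp add: power_mult_distrib ennreal_power mult_ac)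
      finally show ?thesis .
    qed
    define X where "X = (\<Sum>\<^sub>\<infinity>\<xi>. hs_weight \<gamma> \<xi> * (cmod (R5 \<tau> n v \<xi>))^2)"
    have intR: "(\<integral>\<^sup>+\<xi>. ennreal (hs_weight \<gamma> \<xi> * (cmod (R5 \<tau> n v \<xi>))^2) \<partial>CS) \<le> ennreal ((18 * \<tau>^3)^2 * Bd)"
    proof -
      have "(\<integral>\<^sup>+\<xi>. ennreal (hs_weight \<gamma> \<xi> * (cmod (R5 \<tau> n v \<xi>))^2) \<partial>CS) \<le> (\<integral>\<^sup>+\<xi>. ennreal ((18 * \<tau>^3)^2) * (ennreal ((W \<xi>)^2) * (conv \<xi>)^2) \<partial>CS)"
        by (intro nn_integral_mono pw)
      also have "\<dots> = ennreal ((18 * \<tau>^3)^2) * (\<integral>\<^sup>+\<xi>. ennreal ((W \<xi>)^2) * (conv \<xi>)^2 \<partial>CS)"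
        by (simp add: nn_integral_cmult)
      also have "\<dots> \<le> ennreal ((18 * \<tau>^3)^2) * ennreal Bd" by (intro mult_left_mono tri) simp
      also have "\<dots> = ennreal ((18 * \<tau>^3)^2 * Bd)" using Bd0 by (simp add: ennreal_mult)
      finally show ?thesis .
    qed
    have hnn: "\<And>\<xi>. hs_weight \<gamma> \<xi> * (cmod (R5 \<tau> n v \<xi>))^2 \<ge> 0" by (simp add: hs_weight_def)
    have finR: "(\<integral>\<^sup>+\<xi>. ennreal (hs_weight \<gamma> \<xi> * (cmod (R5 \<tau> n v \<xi>))^2) \<partial>CS) < \<infinity>"
      using intR le_less_trans by fastforce
    note IR = infsum_of_nn[of "\<lambda>\<xi>. hs_weight \<gamma> \<xi> * (cmod (R5 \<tau> n v \<xi>))^2", OF hnn finR]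
    have smR: "(\<lambda>\<xi>. hs_weight \<gamma> \<xi> * (cmod (R5 \<tau> n v \<xi>))^2) summable_on UNIV"
      using IR by simp
    have XB: "ennreal X \<le> ennreal ((18 * \<tau>^3)^2 * Bd)"
      unfolding X_def using IR intR by simp
    have X: "X \<le> (18 * \<tau>^3)^2 * Bd" using XB Bd0 by (simp add: ennreal_le_iff)
    have inH: "in_Hs \<gamma> (R5 \<tau> n v)" unfolding in_Hs_def using smR .
    define P where "P = (2*pi)^CARD('d)"
    have P0: "P > 0" unfolding P_def by simp
    have PN: "P * Nr \<le> L^2" using NrL unfolding P_def .
    have PN3: "P^3 * Nr^3 \<le> L^6"
    proof -
      have "(P * Nr)^3 \<le> (L^2)^3" by (rule power_mono[OF PN]) (use P0 Nr0 in simp)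
      then show ?thesis by (simp add: power_mult_distrib power_mult[symmetric])
    qed
    have key: "P * X \<le> (C * \<tau>^3 * L^3)^2"
    proof -
      have "P * X \<le> P * ((18 * \<tau>^3)^2 * Bd)" using X P0 by simp
      also have "\<dots> = 324 * K0 * Sr^2 * \<tau>^6 * (P * Nr^3)"
      proof -
        have t6: "\<tau>^6 = \<tau>^3 * \<tau>^3" by (simp flip: power_add)
        show ?thesis unfolding Bd_def t6 by (simp add: power2_eq_square power3_eq_cube mult_ac)
      qed
      also have "\<dots> \<le> 324 * K0 * Sr^2 * \<tau>^6 * (L^6 / P^2)"
      proof (rule mult_left_mono)
        have "P * Nr^3 = (P^3 * Nr^3) / P^2" using P0 by (simp add: power2_eq_square power3_eq_cube)
        also have "\<dots> \<le> L^6 / P^2" by (rule divide_right_mono[OF PN3]) simp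
        finally show "P * Nr^3 \<le> L^6 / P^2" .
      qed (use K00 tau in simp)
      also have "\<dots> = (C * \<tau>^3 * L^3)^2"
        unfolding C_def P_def[symmetric] using K00 P0
        by (simp add: power_mult_distrib power_divide power2_eq_square power3_eq_cube field_simps eval_nat_numeral)
      finally show ?thesis .
    qed
    have hsn: "hs_norm \<gamma> (R5 \<tau> n v) = sqrt (P * X)" unfolding hs_norm_def P_def X_def ..
    have "hs_norm \<gamma> (R5 \<tau> n v) \<le> C * \<tau>^3 * L^3"
      unfolding hsn
    proof (rule real_le_lsqrt)
      show "0 \<le> C * \<tau>^3 * L^3" unfolding C_def using K00 Sr0 tau L0 by simp
    qed (rule key)
    then show "in_Hs \<gamma> (R5 \<tau> n v) \<and> hs_norm \<gamma> (R5 \<tau> n v) \<le> C * \<tau>^3 * (Linf_norm T (\<gamma> + 2) v)^3"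
      using inH unfolding L_def by simp
  qed
qed


end
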